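(* Let $k\ge1$ and $d\ge 1$ be integers and $c$ a real number with $0< c\le k$. Let $S$ be a binomial random variable with parameters $k$ and $c/k$. If $d\le c\left(1-\frac{1}{k+1}\right)+1$, then \[ \mathbb{P}(S\ge d)\ \ge\ h_d(c) = 1-e^{-c}\sum_{i=0}^{d-1}\frac{c^i}{i!}. \]
   Context: $\mathbb{P}(S\ge d)$ is the probability that a buyer whose values for $k$ items are i.i.d. on $\{0,1\}$ with $\mathbb{P}(1)=c/k$ buys the bundle of all items at posted price $d$. *)

theory Defs
  imports "HOL-Probability.Probability"
begin

text \<open>h_d(c) = 1 - e^{-c} sum_{i=0}^{d-1} c^i / i!  (Poisson(c) tail P(Po(c) >= d)).\<close>
definition h :: "nat \<Rightarrow> real \<Rightarrow> real" where
  "h d c = 1 - exp (- c) * (\<Sum>i<d. c ^ i / fact i)"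

end

theory Submission
  imports Defs
begin

definition bp :: "nat \<Rightarrow> nat \<Rightarrow> real \<Rightarrow> real" where
  "bp m i p = real (m choose i) * p^i * (1-p)^(m-i)"

lemma bp_deriv0: "((\<lambda>p. bp (Suc m) 0 p) has_real_derivative (- real (Suc m) * bp m 0 p)) (at p)"
proof -
  have "((\<lambda>p. (1-p)^Suc m) has_real_derivative real (Suc m) * (1-p)^m * (-1)) (at p)"
    by (rule derivative_eq_intros refl)+ simp
  thus ?thesis unfolding bp_def by (simp add: algebra_simps)
qed

lemma deriv_aux: "((\<lambda>p. C * p^(Suc i) * (1-p)^(Suc r)) has_real_derivative
     C * (real (Suc i) * p^i * (1-p)^(Suc r) - p^(Suc i) * (real (Suc r) * (1-p)^r))) (at p)"
proof -
  have d1: "((\<lambda>p. p^(Suc i)) has_real_derivative real (Suc i) * p^i) (at p)"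
    using DERIV_pow[of "Suc i" p] by simp
  have d2: "((\<lambda>p. (1-p)^(Suc r)) has_real_derivative real (Suc r) * (1-p)^r * (-1)) (at p)"
    by (rule derivative_eq_intros refl)+ simp
  have "((\<lambda>p. C * (p^(Suc i) * (1-p)^(Suc r))) has_real_derivative
     C * (real (Suc i) * p^i * (1-p)^(Suc r) + real (Suc r) * (1-p)^r * (-1) * p^(Suc i))) (at p)"
    by (intro DERIV_cmult DERIV_mult d1 d2)
  thus ?thesis by (simp add: mult.assoc algebra_simps)
qed

lemma bp_deriv: "((\<lambda>p. bp (Suc m) (Suc i) p) has_real_derivative
   (real (Suc m) * (bp m i p - bp m (Suc i) p))) (at p)"
proof (cases "i < m")
  case True
  then obtain r where m: "m = Suc (i + r)" by (auto simp: less_iff_Suc_add)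
  have e1: "real (Suc i) * real (Suc m choose Suc i) = real (Suc m) * real (m choose i)"
  proof -
    have "real (Suc i * (Suc m choose Suc i)) = real (Suc m * (m choose i))"
      using Suc_times_binomial[of i m] by (simp only:)
    thus ?thesis unfolding of_nat_mult .
  qed
  have e2: "real (Suc r) * real (Suc m choose Suc i) = real (Suc m) * real (m choose Suc i)"
  proof -
    have "(Suc m - Suc i) * (Suc m choose Suc i) = Suc m * (Suc m - 1 choose Suc i)"
      by (rule binomial_absorb_comp)
    moreover have "Suc m - Suc i = Suc r" using m by simp
    ultimately have "Suc r * (Suc m choose Suc i) = Suc m * (m choose Suc i)" by simp
    hence "real (Suc r * (Suc m choose Suc i)) = real (Suc m * (m choose Suc i))" by (simp only:)
    thus ?thesis unfolding of_nat_mult .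
  qed
  have "((\<lambda>p. real (Suc m choose Suc i) * p^(Suc i) * (1-p)^(Suc r)) has_real_derivative
     real (Suc m choose Suc i) * (real (Suc i) * p^i * (1-p)^(Suc r) - p^(Suc i) * (real (Suc r) * (1-p)^r))) (at p)"
    by (rule deriv_aux)
  moreover have "real (Suc m choose Suc i) * (real (Suc i) * p^i * (1-p)^(Suc r) - p^(Suc i) * (real (Suc r) * (1-p)^r))
     = real (Suc m) * (bp m i p - bp m (Suc i) p)"
  proof -
    have d1: "m - i = Suc r" "m - Suc i = r" using m by auto
    have "real (Suc m choose Suc i) * (real (Suc i) * p^i * (1-p)^(Suc r) - p^(Suc i) * (real (Suc r) * (1-p)^r))
      = (real (Suc i) * real (Suc m choose Suc i)) * p^i * (1-p)^(Suc r) - (real (Suc r) * real (Suc m choose Suc i)) * p^(Suc i) * (1-p)^r"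
      by (simp add: algebra_simps)
    also have "\<dots> = real (Suc m) * (bp m i p - bp m (Suc i) p)"
      unfolding e1 e2 bp_def d1 by (simp add: algebra_simps)
    finally show ?thesis .
  qed
  moreover have "(\<lambda>p. bp (Suc m) (Suc i) p) = (\<lambda>p. real (Suc m choose Suc i) * p^(Suc i) * (1-p)^(Suc r))"
  proof -
    have "Suc m - Suc i = Suc r" using m by simp
    thus ?thesis unfolding bp_def by (simp only:)
  qed
  ultimately show ?thesis by simp
next
  case False
  show ?thesis
  proof (cases "i = m")
    case True
    have "((\<lambda>p. p^(Suc m)) has_real_derivative real (Suc m) * p^m) (at p)"
      using DERIV_pow[of "Suc m" p] by simp
    moreover have "(\<lambda>p. bp (Suc m) (Suc i) p) = (\<lambda>p. p^(Suc m))" using True by (simp add: bp_def)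
    moreover have "bp m i p - bp m (Suc i) p = p^m" using True by (simp add: bp_def)
    ultimately show ?thesis by simp
  next
    case False
    with \<open>\<not> i < m\<close> have "m < i" by simp
    then show ?thesis unfolding bp_def by (simp add: binomial_eq_0)
  qed
qed

definition Fs :: "nat \<Rightarrow> nat \<Rightarrow> real \<Rightarrow> real" where
  "Fs n j p = (\<Sum>l\<le>j. bp n l p)"

lemma Fs_deriv: "((\<lambda>p. Fs (Suc m) j p) has_real_derivative (- real (Suc m) * bp m j p)) (at p)"
proof (induction j)
  case 0
  then show ?case unfolding Fs_def using bp_deriv0 by simp
next
  case (Suc j)
  have "((\<lambda>p. Fs (Suc m) j p + bp (Suc m) (Suc j) p) has_real_derivative
     (- real (Suc m) * bp m j p) + real (Suc m) * (bp m j p - bp m (Suc j) p)) (at p)"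
    by (intro DERIV_add Suc bp_deriv)
  moreover have "(\<lambda>p. Fs (Suc m) (Suc j) p) = (\<lambda>p. Fs (Suc m) j p + bp (Suc m) (Suc j) p)"
    unfolding Fs_def by simp
  ultimately show ?case by (simp add: algebra_simps)
qed

lemma bp_pascal: "bp (Suc m) (Suc i) p = p * bp m i p + (1-p) * bp m (Suc i) p"
proof (cases "i < m")
  case True
  then obtain r where m: "m = Suc (i + r)" by (auto simp: less_iff_Suc_add)
  have d: "m - i = Suc r" "m - Suc i = r" "Suc m - Suc i = Suc r" using m by auto
  have "bp (Suc m) (Suc i) p = (real (m choose i) + real (m choose Suc i)) * p^(Suc i) * (1-p)^(Suc r)"
    unfolding bp_def d by simp
  also have "\<dots> = p * bp m i p + (1-p) * bp m (Suc i) p"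
    unfolding bp_def d by (simp add: algebra_simps)
  finally show ?thesis .
next
  case False
  then show ?thesis
    by (cases "i = m") (auto simp: bp_def binomial_eq_0)
qed

lemma Fs_succ: "Fs (Suc n) j p = Fs n j p - p * bp n j p"
proof (induction j)
  case 0
  then show ?case unfolding Fs_def bp_def by (simp add: algebra_simps)
next
  case (Suc j)
  have "Fs (Suc n) (Suc j) p = Fs (Suc n) j p + bp (Suc n) (Suc j) p" unfolding Fs_def by simp
  also have "\<dots> = Fs n j p - p * bp n j p + (p * bp n j p + (1-p) * bp n (Suc j) p)"
    using Suc bp_pascal by simp
  also have "\<dots> = Fs n (Suc j) p - p * bp n (Suc j) p" unfolding Fs_def by (simp add: algebra_simps)
  finally show ?case .
qed

lemma bp_mono:
  assumes "0 < p" "p < 1" "real (Suc i) \<le> real (Suc m) * p"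
  shows "bp m i p \<le> bp m (Suc i) p"
proof -
  have "real (Suc m) * p < real (Suc m) * 1" using assms by (intro mult_strict_left_mono) auto
  hence "real (Suc i) < real (Suc m) * 1" by (rule le_less_trans[OF assms(3)])
  hence "real (Suc i) < real (Suc m)" by simp
  hence "i < m" by simp
  then obtain r where m: "m = Suc (i + r)" by (auto simp: less_iff_Suc_add)
  have d: "m - i = Suc r" "m - Suc i = r" using m by auto
  have key: "Suc i * (m choose Suc i) = Suc r * (m choose i)"
    using binomial_absorption[of i m] binomial_absorb_comp[of m i] d by simp
  hence "real (Suc i * (m choose Suc i)) = real (Suc r * (m choose i))" by (simp only:)
  hence key': "real (Suc i) * real (m choose Suc i) = real (Suc r) * real (m choose i)"
    unfolding of_nat_mult .
  define A where "A = p^i * (1-p)^r"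
  have A: "A \<ge> 0" unfolding A_def using assms by simp
  have "real (Suc i) * (bp m (Suc i) p - bp m i p)
      = A * (real (Suc i) * real (m choose Suc i) * p - real (Suc i) * real (m choose i) * (1-p))"
    unfolding bp_def d A_def by (simp add: algebra_simps)
  also have "\<dots> = A * real (m choose i) * (real (Suc r) * p - real (Suc i) * (1-p))"
    unfolding key' by (simp add: algebra_simps)
  also have "\<dots> = A * real (m choose i) * (real (Suc m) * p - real (Suc i))"
    unfolding m by (simp add: algebra_simps)
  also have "\<dots> \<ge> 0" using A assms by simp
  finally have "real (Suc i) * (bp m (Suc i) p - bp m i p) \<ge> 0" .
  thus ?thesis by (simp add: zero_le_mult_iff)
qed

lemma step:
  assumes lam: "0 < lam" "lam \<le> real n" and n1: "n \<ge> 1"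
    and jle: "real j \<le> lam * real n / (real n + 1)" and j1: "j \<ge> 1"
  shows "Fs n j (lam / real n) \<le> Fs (Suc n) j (lam / real (Suc n))"
proof -
  obtain m where n: "n = Suc m" using n1 by (cases n) auto
  obtain i where j: "j = Suc i" using j1 by (cases j) auto
  define \<Phi> where "\<Phi> p = Fs n j p - (lam - real n * p) * bp n j p" for p
  have deriv: "(\<Phi> has_real_derivative real n * (bp m i p - bp m j p) * ((real n + 1) * p - lam)) (at p)" for p
  proof -
    have dl: "((\<lambda>p. lam - real n * p) has_real_derivative - real n) (at p)"
      by (auto intro!: derivative_eq_intros)
    have "((\<lambda>p. Fs (Suc m) (Suc i) p - (lam - real n * p) * bp (Suc m) (Suc i) p) has_real_derivative
      (- real (Suc m) * bp m (Suc i) p) - ((- real n) * bp (Suc m) (Suc i) p + (real (Suc m) * (bp m i p - bp m (Suc i) p)) * (lam - real n * p))) (at p)"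
      by (intro DERIV_diff DERIV_mult Fs_deriv dl bp_deriv)
    moreover have "(- real (Suc m) * bp m (Suc i) p) - ((- real n) * bp (Suc m) (Suc i) p + (real (Suc m) * (bp m i p - bp m (Suc i) p)) * (lam - real n * p))
       = real n * (bp m i p - bp m j p) * ((real n + 1) * p - lam)"
      unfolding bp_pascal j n by (simp add: algebra_simps)
    ultimately show ?thesis unfolding \<Phi>_def[abs_def] n j by simp
  qed
  define a where "a = lam / real (Suc n)"
  define b where "b = lam / real n"
  have npos: "real n > 0" using n1 by simp
  have ab: "a \<le> b" unfolding a_def b_def using lam npos by (simp add: frac_le)
  have b1: "b \<le> 1" unfolding b_def using lam npos by simp
  have "\<Phi> a \<ge> \<Phi> b"
  proof (rule DERIV_nonpos_imp_decreasing_open[OF ab])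
    fix x assume x: "a < x" "x < b"
    have apos: "a > 0" unfolding a_def using lam by simp
    have "real n * a < real n * x" using x npos by simp
    moreover have "real n * a = lam * real n / (real n + 1)" unfolding a_def by (simp add: algebra_simps)
    ultimately have "real j \<le> real n * x" using jle by linarith
    hence "real (Suc i) \<le> real (Suc m) * x" by (simp only: j[symmetric] n[symmetric])
    hence "bp m i x \<le> bp m (Suc i) x" using x apos b1 by (intro bp_mono) auto
    moreover have "(real n + 1) * x - lam \<ge> 0"
    proof -
      have "(real n + 1) * a = lam" unfolding a_def by (simp add: field_simps)
      moreover have "(real n + 1) * a \<le> (real n + 1) * x" using x by simp
      ultimately show ?thesis by linarith
    qed
    ultimately have "real n * (bp m i x - bp m j x) * ((real n + 1) * x - lam) \<le> 0"
      using npos j by (simp add: mult_nonneg_nonpos mult_nonpos_nonneg)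
    thus "\<exists>y. (\<Phi> has_real_derivative y) (at x) \<and> y \<le> 0" using deriv by blast
  next
    show "continuous_on {a..b} \<Phi>"
      by (rule DERIV_continuous_on[where D="\<lambda>p. real n * (bp m i p - bp m j p) * ((real n + 1) * p - lam)"])
        (rule has_field_derivative_at_within[OF deriv])
  qed
  moreover have "\<Phi> b = Fs n j (lam / real n)" unfolding \<Phi>_def b_def using npos by simp
  moreover have "\<Phi> a = Fs (Suc n) j (lam / real (Suc n))"
  proof -
    have "lam - real n * a = a" unfolding a_def by (simp add: field_simps)
    thus ?thesis unfolding \<Phi>_def Fs_succ a_def by simp
  qed
  ultimately show ?thesis by simp
qed

lemma bp_lim: "(\<lambda>n. bp n l (c / real n)) \<longlonglongrightarrow> c^l * exp (-c) / fact l"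
proof -
  define g where "g n = (\<Prod>t\<in>{0..<l}. 1 - real t / real n) / fact l * c^l * (1 + (-c) / real n)^n / (1 - c / real n)^l" for n
  have L: "g \<longlonglongrightarrow> (\<Prod>t\<in>{0..<l}. 1 - 0) / fact l * c^l * exp(-c) / (1 - 0)^l"
    unfolding g_def by (intro tendsto_intros tendsto_exp_limit_sequentially) auto
  have E: "eventually (\<lambda>n. g n = bp n l (c / real n)) sequentially"
  proof -
    obtain N :: nat where N: "real N > \<bar>c\<bar>" using reals_Archimedean2 by blast
    have "g n = bp n l (c / real n)" if n: "n \<ge> max l (Suc N)" for n
    proof -
      have npos: "real n > 0" using n by simp
      have nc: "real n > c" using n N by (smt (verit) max.bounded_iff of_nat_le_iff le_SucI)
      have ne: "1 - c / real n \<noteq> 0" using nc npos by (simp add: field_simps)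
      have ln: "l \<le> n" using n by simp
      have ch: "real (n choose l) = (\<Prod>t=0..<l. real n - real t) / fact l"
      proof -
        have "real (n choose l) = real n gchoose l" by (rule binomial_gbinomial)
        hence "fact l * real (n choose l) = (\<Prod>t=0..<l. real n - real t)"
          using gbinomial_mult_fact[of l "real n"] by simp
        thus ?thesis by (simp add: field_simps)
      qed
      have pr: "(\<Prod>t\<in>{0..<l}. 1 - real t / real n) = (\<Prod>t=0..<l. real n - real t) / real n ^ l"
      proof -
        have "(\<Prod>t\<in>{0..<l}. 1 - real t / real n) = (\<Prod>t\<in>{0..<l}. (real n - real t) / real n)"
          using npos by (intro prod.cong) (auto simp: field_simps)
        also have "\<dots> = (\<Prod>t=0..<l. real n - real t) / (\<Prod>t\<in>{0..<l}. real n)"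
          by (rule prod_dividef)
        finally show ?thesis by simp
      qed
      have pw: "(1 - c / real n)^(n - l) = (1 - c / real n)^n / (1 - c / real n)^l"
        using ne ln by (rule power_diff)
      show ?thesis unfolding g_def bp_def ch pr pw using npos
        by (simp add: power_divide field_simps)
    qed
    thus ?thesis unfolding eventually_sequentially by blast
  qed
  have "(\<Prod>t\<in>{0..<l}. (1::real) - 0) / fact l * c^l * exp(-c) / (1 - 0)^l = c^l * exp (-c) / fact l"
    by simp
  with Lim_transform_eventually[OF L E] show ?thesis by simp
qed

lemma Fs_lim: "(\<lambda>n. Fs n j (c / real n)) \<longlonglongrightarrow> exp (-c) * (\<Sum>l\<le>j. c^l / fact l)"
proof -
  have "(\<lambda>n. \<Sum>l\<le>j. bp n l (c / real n)) \<longlonglongrightarrow> (\<Sum>l\<le>j. c^l * exp (-c) / fact l)"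
    by (intro tendsto_sum bp_lim)
  moreover have "(\<Sum>l\<le>j. c^l * exp (-c) / fact l) = exp (-c) * (\<Sum>l\<le>j. c^l / fact l)"
    by (simp add: sum_distrib_left field_simps)
  ultimately show ?thesis unfolding Fs_def by simp
qed

lemma main_ineq:
  fixes k j :: nat and c :: real
  assumes "k \<ge> 1" "0 < c" "c \<le> real k" "real j \<le> c * (1 - 1 / (real k + 1))"
  shows "Fs k j (c / real k) \<le> exp (-c) * (\<Sum>l\<le>j. c^l / fact l)"
proof (cases "j = 0")
  case True
  have k0: "real k > 0" using assms by simp
  have "Fs k j (c / real k) = (1 - c / real k)^k" unfolding True Fs_def bp_def by simp
  also have "\<dots> \<le> exp (- c / real k) ^ k"
  proof (rule power_mono)
    show "1 - c / real k \<le> exp (- c / real k)" using exp_ge_add_one_self[of "- c / real k"] by simp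
    show "0 \<le> 1 - c / real k" using assms k0 by (simp add: field_simps)
  qed
  also have "\<dots> = exp (-c)" using k0 exp_of_nat_mult[of k "- c / real k", symmetric] by simp
  finally show ?thesis unfolding True by simp
next
  case False
  define G where "G t = Fs (t + k) j (c / real (t + k))" for t
  have "incseq G"
  proof (rule incseq_SucI)
    fix t
    define n where "n = t + k"
    have n1: "n \<ge> 1" "real k \<le> real n" unfolding n_def using assms by auto
    have "1 / (real n + 1) \<le> 1 / (real k + 1)"
      using n1 by (intro divide_left_mono) auto
    hence "c * (1 - 1 / (real k + 1)) \<le> c * (1 - 1 / (real n + 1))"
      using assms by (intro mult_left_mono) auto
    also have "\<dots> = c * real n / (real n + 1)" by (simp add: field_simps)
    finally have jle: "real j \<le> c * real n / (real n + 1)" using assms by linarith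
    have "Fs n j (c / real n) \<le> Fs (Suc n) j (c / real (Suc n))"
      using step[OF assms(2) _ n1(1) jle] n1 assms False by auto
    thus "G t \<le> G (Suc t)" unfolding G_def n_def by simp
  qed
  moreover have "G \<longlonglongrightarrow> exp (-c) * (\<Sum>l\<le>j. c^l / fact l)"
    unfolding G_def using LIMSEQ_ignore_initial_segment[OF Fs_lim[of j c], where k=k] by simp
  ultimately have "G 0 \<le> exp (-c) * (\<Sum>l\<le>j. c^l / fact l)" by (rule incseq_le)
  thus ?thesis unfolding G_def by simp
qed

theorem corollary1:
  fixes k d :: nat and c :: real
  assumes "k \<ge> 1" and "d \<ge> 1" and "0 < c" and "c \<le> real k"
    and "real d \<le> c * (1 - 1 / (real k + 1)) + 1"
  shows "measure_pmf.prob (binomial_pmf k (c / real k)) {d..} \<ge> h d c"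
proof -
  obtain j where d: "d = Suc j" using assms(2) by (cases d) auto
  have k0: "real k > 0" using assms by simp
  have p0: "0 \<le> c / real k" and p1: "c / real k \<le> 1" using assms k0 by auto
  have jle: "real j \<le> c * (1 - 1 / (real k + 1))" using assms(5) d by simp
  have set: "{d..} = space (measure_pmf (binomial_pmf k (c / real k))) - {..j}" using d by auto
  have "measure_pmf.prob (binomial_pmf k (c / real k)) {d..} =
      1 - measure_pmf.prob (binomial_pmf k (c / real k)) {..j}"
    unfolding set by (rule measure_pmf.prob_compl) simp
  also have "measure_pmf.prob (binomial_pmf k (c / real k)) {..j} = Fs k j (c / real k)"
    unfolding Fs_def bp_def using p0 p1 by (simp add: measure_measure_pmf_finite)
  finally have P: "measure_pmf.prob (binomial_pmf k (c / real k)) {d..} = 1 - Fs k j (c / real k)" .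
  have H: "h d c = 1 - exp (-c) * (\<Sum>l\<le>j. c^l / fact l)"
    unfolding h_def d lessThan_Suc_atMost ..
  show ?thesis unfolding P H using main_ineq[OF assms(1,3,4) jle] by simp
qed

end
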